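(* \begin{enumerate} \item The element $\{1\}$ is a cancellative prime element of $\mathcal P_{\mathrm{fin}}(\mathbb N_0)$, and $\mathcal P_{\mathrm{fin}}(\mathbb N_0)=F\times\mathcal P_{\mathrm{fin},0}(\mathbb N_0)$, where $F$ is the free abelian monoid generated by $\{1\}$. Moreover, $\mathcal P_{\mathrm{fin}}(\mathbb N_0)$ is fully elastic. \item Let $R=D[X_1,\dots,X_n]$ be the polynomial ring in $n\ge2$ indeterminates over a domain $D$ such that $\mathcal I(R)$ is a BF-monoid. Then $\mathcal P_{\mathrm{fin}}(\mathbb N_0)$ is isomorphic to a submonoid of $\mathcal I(R)$. \end{enumerate}
   Context: $\mathcal P_{\mathrm{fin}}(\mathbb N_0)$ (the power monoid) is the set of finite nonempty subsets of $\mathbb N_0$ with set addition $A+B=\{a+b:a\in A,b\in B\}$ as operation (identity $\{0\}$); $\mathcal P_{\mathrm{fin},0}(\mathbb N_0)$ is its submonoid of sets containing $0$. These are commutative, reduced, unit-cancellative. An element $p$ is prime if it is a non-unit and $p\mid a+b$ implies $p\mid a$ or $p\mid b$; cancellative if $p+b=p+c$ implies $b=c$. $\mathcal I(R)$ is the semigroup of nonzero ideals under multiplication. Arithmetic notions: atoms; $\mathsf L(a)$ = set of lengths of factorizations of $a$ into atoms (up to units); $\mathcal L(H)=\{\mathsf L(a)\}$; BF-monoid: all $\mathsf L(a)$ finite nonempty; $\rho(L)=\max L/\min L$, $\rho(\{0\})=1$, $\rho(H)=\sup\rho(L)$; fully elastic: every rational $q$ with $1<q<\rho(H)$ equals $\rho(L)$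 for some $L\in\mathcal L(H)$. *)

theory Defs
  imports Complex_Main "HOL-Library.Poly_Mapping" "HOL-Library.Extended_Real"
begin

definition mdvd :: "'m set \<Rightarrow> ('m \<Rightarrow> 'm \<Rightarrow> 'm) \<Rightarrow> 'm \<Rightarrow> 'm \<Rightarrow> bool" where
  "mdvd S f a b \<longleftrightarrow> (\<exists>c\<in>S. b = f a c)"

definition munit :: "'m set \<Rightarrow> ('m \<Rightarrow> 'm \<Rightarrow> 'm) \<Rightarrow> 'm \<Rightarrow> 'm \<Rightarrow> bool" where
  "munit S f e u \<longleftrightarrow> u \<in> S \<and> (\<exists>v\<in>S. f u v = e)"

definition matom :: "'m set \<Rightarrow> ('m \<Rightarrow> 'm \<Rightarrow> 'm) \<Rightarrow> 'm \<Rightarrow> 'm \<Rightarrow> bool" where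
  "matom S f e a \<longleftrightarrow> a \<in> S \<and> \<not> munit S f e a \<and>
     (\<forall>b\<in>S. \<forall>c\<in>S. a = f b c \<longrightarrow> munit S f e b \<or> munit S f e c)"

definition mprime :: "'m set \<Rightarrow> ('m \<Rightarrow> 'm \<Rightarrow> 'm) \<Rightarrow> 'm \<Rightarrow> 'm \<Rightarrow> bool" where
  "mprime S f e p \<longleftrightarrow> p \<in> S \<and> \<not> munit S f e p \<and>
     (\<forall>a\<in>S. \<forall>b\<in>S. mdvd S f p (f a b) \<longrightarrow> mdvd S f p a \<or> mdvd S f p b)"

definition mcancellative :: "'m set \<Rightarrow> ('m \<Rightarrow> 'm \<Rightarrow> 'm) \<Rightarrow> 'm \<Rightarrow> bool" where
  "mcancellative S f p \<longleftrightarrow> p \<in> S \<and> (\<forall>b\<in>S. \<forall>c\<in>S. f p b = f p c \<longrightarrow> b = c)"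

definition mprod :: "('m \<Rightarrow> 'm \<Rightarrow> 'm) \<Rightarrow> 'm \<Rightarrow> 'm list \<Rightarrow> 'm" where
  "mprod f e xs = foldr f xs e"

definition mlengths :: "'m set \<Rightarrow> ('m \<Rightarrow> 'm \<Rightarrow> 'm) \<Rightarrow> 'm \<Rightarrow> 'm \<Rightarrow> nat set" where
  "mlengths S f e a = {length xs | xs. set xs \<subseteq> {x. matom S f e x} \<and>
       (\<exists>u. munit S f e u \<and> a = f u (mprod f e xs))}"

definition BF_monoid :: "'m set \<Rightarrow> ('m \<Rightarrow> 'm \<Rightarrow> 'm) \<Rightarrow> 'm \<Rightarrow> bool" where
  "BF_monoid S f e \<longleftrightarrow> (\<forall>a\<in>S. finite (mlengths S f e a) \<and> mlengths S f e a \<noteq> {})"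

definition rho_len :: "nat set \<Rightarrow> ereal" where
  "rho_len L = (if L = {0} then 1 else ereal (real (Max L) / real (Min L)))"

definition rho_monoid :: "'m set \<Rightarrow> ('m \<Rightarrow> 'm \<Rightarrow> 'm) \<Rightarrow> 'm \<Rightarrow> ereal" where
  "rho_monoid S f e = (SUP a\<in>S. rho_len (mlengths S f e a))"

definition fully_elastic :: "'m set \<Rightarrow> ('m \<Rightarrow> 'm \<Rightarrow> 'm) \<Rightarrow> 'm \<Rightarrow> bool" where
  "fully_elastic S f e \<longleftrightarrow> (\<forall>q::rat. 1 < q \<and> ereal (real_of_rat q) < rho_monoid S f e \<longrightarrow>
      (\<exists>a\<in>S. rho_len (mlengths S f e a) = ereal (real_of_rat q)))"

definition sumset :: "nat set \<Rightarrow> nat set \<Rightarrow> nat set" where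
  "sumset A B = {a + b | a b. a \<in> A \<and> b \<in> B}"

definition Pfin :: "nat set set" where
  "Pfin = {A. finite A \<and> A \<noteq> {}}"

definition Pfin0 :: "nat set set" where
  "Pfin0 = {A. finite A \<and> A \<noteq> {} \<and> 0 \<in> A}"

definition setpow :: "nat \<Rightarrow> nat set \<Rightarrow> nat set" where
  "setpow k A = ((sumset A) ^^ k) {0}"

definition Fgen :: "nat set set" where
  "Fgen = {setpow k {1} | k. True}"

definition is_ideal :: "'r::comm_ring_1 set \<Rightarrow> bool" where
  "is_ideal I \<longleftrightarrow> 0 \<in> I \<and> (\<forall>a\<in>I. \<forall>b\<in>I. a + b \<in> I) \<and> (\<forall>a\<in>I. \<forall>r. r * a \<in> I)"

definition nonzero_ideals :: "'r::comm_ring_1 set set" where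
  "nonzero_ideals = {I. is_ideal I \<and> I \<noteq> {0}}"

definition ideal_prod :: "'r::comm_ring_1 set \<Rightarrow> 'r set \<Rightarrow> 'r set" where
  "ideal_prod I J = \<Inter>{K. is_ideal K \<and> {a * b | a b. a \<in> I \<and> b \<in> J} \<subseteq> K}"

text \<open>Polynomial ring D[X_v | v :: 'v] (for finite 'v, n = CARD('v) indeterminates).\<close>
type_synonym ('v, 'a) mpoly_ring = "('v \<Rightarrow>\<^sub>0 nat) \<Rightarrow>\<^sub>0 'a"

end

theory Submission
  imports Defs
begin


lemma sumset_iff: "z \<in> sumset A B \<longleftrightarrow> (\<exists>a\<in>A. \<exists>b\<in>B. z = a + b)"
  by (auto simp: sumset_def)

lemma sumset_image: "sumset A B = (\<lambda>(a,b). a + b) ` (A \<times> B)"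
  by (auto simp: sumset_def)

lemma sumset_comm: "sumset A B = sumset B A"
  unfolding sumset_def by (auto, metis add.commute, metis add.commute)

lemma sumset_assoc: "sumset (sumset A B) C = sumset A (sumset B C)"
  unfolding sumset_def by (auto, metis add.assoc, metis add.assoc)

lemma sumset_0_left[simp]: "sumset {0} A = A"
  by (auto simp: sumset_def)

lemma sumset_0_right[simp]: "sumset A {0} = A"
  by (auto simp: sumset_def)

lemma sumset_single: "sumset {k} B = (+) k ` B"
  by (auto simp: sumset_def)

lemma sumset_Pfin: "A \<in> Pfin \<Longrightarrow> B \<in> Pfin \<Longrightarrow> sumset A B \<in> Pfin"
  unfolding Pfin_def sumset_image by auto

lemma Max_sumset: "A \<in> Pfin \<Longrightarrow> B \<in> Pfin \<Longrightarrow> Max (sumset A B) = Max A + Max B"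
  apply (rule Max_eqI)
  using sumset_Pfin[of A B] apply (simp add: Pfin_def)
   apply (auto simp: sumset_iff Pfin_def intro!: add_mono)
  apply (metis Max_in empty_iff)
  done

lemma Min_sumset: "A \<in> Pfin \<Longrightarrow> B \<in> Pfin \<Longrightarrow> Min (sumset A B) = Min A + Min B"
  apply (rule Min_eqI)
  using sumset_Pfin[of A B] apply (simp add: Pfin_def)
   apply (auto simp: sumset_iff Pfin_def intro!: add_mono)
  apply (metis Min_in empty_iff)
  done

lemma Pfin_single[simp]: "{k} \<in> Pfin" by (simp add: Pfin_def)

lemma munit_iff: "munit Pfin sumset {0} u \<longleftrightarrow> u = {0}"
proof
  assume "munit Pfin sumset {0} u"
  then obtain v where u: "u \<in> Pfin" and v: "v \<in> Pfin" and e: "sumset u v = {0}"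
    by (auto simp: munit_def)
  obtain b where b: "b \<in> v" using v by (auto simp: Pfin_def)
  have "\<forall>a\<in>u. a = 0"
  proof
    fix a assume "a \<in> u"
    then have "a + b \<in> sumset u v" using b by (auto simp: sumset_iff)
    then show "a = 0" using e by simp
  qed
  then show "u = {0}" using u by (auto simp: Pfin_def)
next
  assume "u = {0}" then show "munit Pfin sumset {0} u"
    by (auto simp: munit_def intro!: bexI[of _ "{0}"])
qed

lemma matom_iff: "matom Pfin sumset {0} a \<longleftrightarrow> a \<in> Pfin \<and> a \<noteq> {0} \<and>
   (\<forall>b\<in>Pfin. \<forall>c\<in>Pfin. a = sumset b c \<longrightarrow> b = {0} \<or> c = {0})"
  by (simp add: matom_def munit_iff)

abbreviation "atom \<equiv> matom Pfin sumset {0}"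
abbreviation "mp \<equiv> mprod sumset {0}"

lemma mp_Nil[simp]: "mp [] = {0}" by (simp add: mprod_def)
lemma mp_Cons[simp]: "mp (x # xs) = sumset x (mp xs)" by (simp add: mprod_def)

lemma mp_Pfin: "set xs \<subseteq> Pfin \<Longrightarrow> mp xs \<in> Pfin"
  by (induction xs) (auto intro: sumset_Pfin)

lemma mp_append: "mp (xs @ ys) = sumset (mp xs) (mp ys)"
  by (induction xs) (auto simp: sumset_assoc)

lemma Max_mp: "set xs \<subseteq> Pfin \<Longrightarrow> Max (mp xs) = sum_list (map Max xs)"
  by (induction xs) (auto simp: Max_sumset mp_Pfin)

lemma Min_mp: "set xs \<subseteq> Pfin \<Longrightarrow> Min (mp xs) = sum_list (map Min xs)"
  by (induction xs) (auto simp: Min_sumset mp_Pfin)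

lemma mlengths_eq: "mlengths Pfin sumset {0} a =
   {length xs |xs. set xs \<subseteq> {x. atom x} \<and> a = mp xs}"
  by (auto simp: mlengths_def munit_iff)

lemma max0: assumes "b \<in> Pfin" "Max b = 0" shows "b = {0}"
proof -
  have f: "finite b" "b \<noteq> {}" using assms by (auto simp: Pfin_def)
  have "\<forall>x\<in>b. x = 0" using Max_ge[OF f(1)] assms(2) by fastforce
  then show ?thesis using f by auto
qed

lemma atom_Max1: assumes "a \<in> Pfin" "Max a = 1" shows "atom a"
  unfolding matom_iff
proof (intro conjI ballI impI)
  show "a \<in> Pfin" by fact
  show "a \<noteq> {0}" using assms by auto
  fix b c assume b: "b \<in> Pfin" and c: "c \<in> Pfin" and e: "a = sumset b c"
  then have "Max b + Max c = 1" using assms Max_sumset by metis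
  then have "Max b = 0 \<or> Max c = 0" by arith
  then show "b = {0} \<or> c = {0}" using max0 b c by blast
qed

lemma atom_Max_pos: "atom a \<Longrightarrow> 1 \<le> Max a"
  using max0 by (fastforce simp: matom_iff)

lemma zero_sumset: "0 \<in> sumset b c \<longleftrightarrow> 0 \<in> b \<and> 0 \<in> c"
  by (auto simp: sumset_iff)

lemma sub_sumset: "0 \<in> c \<Longrightarrow> b \<subseteq> sumset b c"
  unfolding subset_iff sumset_iff by (metis add_0_right)

definition Odd :: "nat \<Rightarrow> nat set" where "Odd p = insert 0 {i. odd i \<and> i \<le> p}"

lemma Odd_Pfin: "Odd p \<in> Pfin" by (simp add: Odd_def Pfin_def)

lemma Max_Odd: "odd p \<Longrightarrow> Max (Odd p) = p"
  by (rule Max_eqI) (auto simp: Odd_def)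

lemma atom_Odd: assumes p: "odd p" shows "atom (Odd p)"
  unfolding matom_iff
proof (intro conjI ballI impI)
  show "Odd p \<in> Pfin" by (rule Odd_Pfin)
  show "Odd p \<noteq> {0}" using p by (auto simp: Odd_def)
  fix b c assume b: "b \<in> Pfin" and c: "c \<in> Pfin" and e: "Odd p = sumset b c"
  show "b = {0} \<or> c = {0}"
  proof (rule ccontr)
    assume nz: "\<not> (b = {0} \<or> c = {0})"
    have "0 \<in> Odd p" by (simp add: Odd_def)
    then have z: "0 \<in> b" "0 \<in> c" using e zero_sumset by auto
    have "b \<subseteq> Odd p" using e sub_sumset[OF z(2)] by simp
    moreover have "c \<subseteq> Odd p" using e sub_sumset[OF z(1), of c] sumset_comm by metis
    moreover have "Max b \<in> b" "Max c \<in> c" using b c by (auto simp: Pfin_def)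
    moreover have "Max b \<noteq> 0" "Max c \<noteq> 0" using nz max0 b c by auto
    ultimately have "odd (Max b)" "odd (Max c)" by (auto simp: Odd_def)
    moreover have "Max b + Max c = p" using Max_sumset[OF b c] e Max_Odd[OF p] by simp
    ultimately show False using p by (metis even_add)
  qed
qed

lemma sumset01_Odd: assumes p: "odd p" shows "sumset {0,1} (Odd p) = {0..p+1}"
proof
  show "sumset {0,1} (Odd p) \<subseteq> {0..p+1}" by (auto simp: sumset_iff Odd_def)
  show "{0..p+1} \<subseteq> sumset {0,1} (Odd p)"
  proof
    fix x assume x: "x \<in> {0..p+1}"
    show "x \<in> sumset {0,1} (Odd p)"
    proof (cases "x = 0 \<or> odd x")
      case True
      then have "x \<in> Odd p" using x p by (auto simp: Odd_def) (metis Suc_leI antisym_conv1 even_Suc le_SucE)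
      then show ?thesis unfolding sumset_iff by force
    next
      case False
      then have "x - 1 \<in> Odd p" "x = 1 + (x - 1)" using x by (auto simp: Odd_def)
      then show ?thesis unfolding sumset_iff by blast
    qed
  qed
qed

lemma sumset01_int: "sumset {0,1} {0..j} = {0..Suc j}"
proof
  show "sumset {0,1} {0..j} \<subseteq> {0..Suc j}" by (auto simp: sumset_iff)
  show "{0..Suc j} \<subseteq> sumset {0,1} {0..j}"
  proof
    fix x assume x: "x \<in> {0..Suc j}"
    show "x \<in> sumset {0,1} {0..j}"
    proof (cases "x = 0")
      case True then show ?thesis unfolding sumset_iff by force
    next
      case False
      then have "x - 1 \<in> {0..j}" "x = 1 + (x - 1)" using x by auto
      then show ?thesis unfolding sumset_iff by blast
    qed
  qed
qed

lemma mp_rep01: "mp (replicate j {0,1}) = {0..j}"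
  by (induction j) (simp, simp only: replicate_Suc mp_Cons sumset01_int)

lemma mp_rep1: "mp (replicate k {1}) = {k}"
  by (induction k) (auto simp: sumset_iff)



lemma mp_filter: "mp xs = sumset (mp (filter P xs)) (mp (filter (\<lambda>x. \<not> P x) xs))"
proof (induction xs)
  case Nil then show ?case by simp
next
  case (Cons x xs)
  show ?case
  proof (cases "P x")
    case True then show ?thesis using Cons by (simp add: sumset_assoc)
  next
    have lc: "sumset x (sumset A B) = sumset A (sumset x B)" for A B
    proof -
      have "sumset x (sumset A B) = sumset (sumset x A) B" by (simp only: sumset_assoc)
      also have "\<dots> = sumset (sumset A x) B" by (simp only: sumset_comm[of x A])
      also have "\<dots> = sumset A (sumset x B)" by (simp only: sumset_assoc)
      finally show ?thesis .
    qed
    case False then show ?thesis using Cons by (simp add: lc)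
  qed
qed

lemma zero_mp: "\<forall>x\<in>set xs. 0 \<in> x \<Longrightarrow> 0 \<in> mp xs"
  by (induction xs) (auto simp: zero_sumset)

lemma len_le_sum: "\<forall>x\<in>set xs. 1 \<le> f x \<Longrightarrow> length xs \<le> sum_list (map f xs)"
  by (induction xs) auto

lemma atom_Pfin: "atom a \<Longrightarrow> a \<in> Pfin" by (simp add: matom_iff)

lemma atom_nonzero_min: assumes a: "atom a" and z: "0 \<notin> a" shows "a = {1}"
proof -
  define c where "c = (\<lambda>x. x - 1) ` a"
  have aP: "a \<in> Pfin" using a by (simp add: matom_iff)
  have cP: "c \<in> Pfin" using aP by (auto simp: c_def Pfin_def)
  have "a = sumset {1} c" unfolding sumset_single c_def image_image
  proof -
    have h: "\<And>x. x \<in> a \<Longrightarrow> 1 + (x - 1) = x"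
    proof -
      fix x assume xa: "x \<in> a"
      have "x \<noteq> 0" proof assume "x = 0" with xa z show False by simp qed
      then show "1 + (x - 1) = x" by simp
    qed
    have "(\<lambda>x. 1 + (x - 1)) ` a = (\<lambda>x. x) ` a" using h by (intro image_cong) auto
    then show "a = (\<lambda>x. 1 + (x - 1)) ` a" by simp
  qed
  moreover have "{1} \<noteq> ({0}::nat set)" by simp
  moreover have H: "\<forall>b\<in>Pfin. \<forall>c\<in>Pfin. a = sumset b c \<longrightarrow> b = {0} \<or> c = {0}"
    using a by (simp add: matom_iff)
  ultimately have "c = {0}" using H[rule_format, OF Pfin_single cP] by blast
  then show ?thesis using \<open>a = sumset {1} c\<close> by (simp add: sumset_single)
qed

lemma shift_int: "sumset {k} {0..N} = {k..k+N}"
  unfolding sumset_single by (simp add: add.commute)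

lemma notatom_int: assumes "odd p" shows "\<not> atom {0..p+1}"
proof -
  have "{0..p+1} = sumset {0,1} (Odd p)" using sumset01_Odd[OF assms] by simp
  moreover have "{0,1} \<noteq> ({0}::nat set)" "Odd p \<noteq> {0}" using assms by (auto simp: Odd_def)
  moreover have "{0,1::nat} \<in> Pfin" by (simp add: Pfin_def)
  ultimately show ?thesis
  proof (intro notI)
    assume eq: "{0..p+1} = sumset {0,1} (Odd p)" and ne: "{0,1} \<noteq> ({0}::nat set)" "Odd p \<noteq> {0}"
      and P: "{0,1::nat} \<in> Pfin" and at: "atom {0..p+1}"
    from at have H: "\<forall>b\<in>Pfin. \<forall>c\<in>Pfin. {0..p+1} = sumset b c \<longrightarrow> b = {0} \<or> c = {0}"
      unfolding matom_iff by (elim conjE)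
    show False using H[rule_format, OF P Odd_Pfin eq] ne by blast
  qed
qed

lemma elastic_elem:
  fixes m n :: nat assumes n: "1 \<le> n" and nm: "n < m"
  shows "mlengths Pfin sumset {0} {2*n-2..2*m} \<subseteq> {2*n..2*m}"
    and "2*n \<in> mlengths Pfin sumset {0} {2*n-2..2*m}"
    and "2*m \<in> mlengths Pfin sumset {0} {2*n-2..2*m}"
proof -
  define k where "k = 2*n - 2"
  define N where "N = 2*(m-n) + 2"
  have kN: "k + N = 2*m" "k + 2 = 2*n" "odd (N - 1)" "N - 1 + 1 = N" "N \<ge> 4"
    using n nm by (auto simp: k_def N_def)
  have T: "{2*n-2..2*m} = {k..k+N}" using kN by (simp add: k_def)
  have a1: "atom {1}" by (rule atom_Max1) auto
  have a01: "atom {0,1}" by (rule atom_Max1) (auto simp: Pfin_def)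
  show "mlengths Pfin sumset {0} {2*n-2..2*m} \<subseteq> {2*n..2*m}"
  proof
    fix l assume "l \<in> mlengths Pfin sumset {0} {2*n-2..2*m}"
    then obtain xs where xs: "set xs \<subseteq> {x. atom x}" and e: "{k..k+N} = mp xs" and l: "l = length xs"
      unfolding mlengths_eq T by auto
    have xsP: "set xs \<subseteq> Pfin" using xs atom_Pfin by auto
    have "Max {k..k+N} = k + N" by (rule Max_eqI) auto
    then have "Max (mp xs) = k + N" using e by simp
    then have "sum_list (map Max xs) = k + N" using Max_mp[OF xsP] by simp
    moreover have "length xs \<le> sum_list (map Max xs)"
      using xs atom_Max_pos by (intro len_le_sum) auto
    ultimately have up: "l \<le> 2*m" using l kN by simp
    define zs where "zs = filter (\<lambda>a. 0 \<in> a) xs"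
    define ys where "ys = filter (\<lambda>a. \<not> 0 \<in> a) xs"
    have len: "length zs + length ys = length xs" unfolding zs_def ys_def by (rule sum_length_filter_compl)
    have "\<forall>y\<in>set ys. y = {1}" using xs atom_nonzero_min by (auto simp: ys_def)
    then have "replicate (length ys) {1} = ys" by (rule replicate_length_same)
    then have mys: "mp ys = {length ys}" using mp_rep1 by metis
    have z0: "0 \<in> mp zs" by (rule zero_mp) (simp add: zs_def)
    have "mp xs = sumset (mp zs) (mp ys)" unfolding zs_def ys_def by (rule mp_filter)
    then have Te: "{k..k+N} = (+) (length ys) ` mp zs" using e mys by (simp add: sumset_comm sumset_single)
    have "length ys \<in> {k..k+N}" using Te z0 by force
    moreover have "k \<in> (+) (length ys) ` mp zs" unfolding Te[symmetric] by simp
    ultimately have jk: "length ys = k" by auto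
    have memb: "x \<in> mp zs \<longleftrightarrow> k + x \<in> {k..k+N}" for x
    proof -
      have "k + x \<in> (+) k ` mp zs \<longleftrightarrow> x \<in> mp zs" by (rule inj_image_mem_iff) simp
      then show ?thesis using Te jk by simp
    qed
    have mz: "mp zs = {0..N}"
    proof (intro set_eqI)
      fix x show "x \<in> mp zs \<longleftrightarrow> x \<in> {0..N}" using memb[of x] by simp
    qed
    have "length zs \<ge> 2"
    proof (rule ccontr)
      assume "\<not> 2 \<le> length zs"
      then have "zs = [] \<or> (\<exists>A. zs = [A])" by (cases zs; cases "tl zs") auto
      then show False
      proof
        assume "zs = []" then have "mp zs = {0}" by simp
        then show False using mz kN by (metis atLeastAtMost_singleton_iff not_numeral_le_zero)
      next
        assume "\<exists>A. zs = [A]"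
        then obtain A where A: "zs = [A]" by blast
        then have "A = {0..N}" using mz by simp
        moreover have "A \<in> set zs" using A by simp
        then have "A \<in> set xs" unfolding zs_def by simp
        then have "atom A" using xs by blast
        ultimately show False using notatom_int[OF kN(3)] kN(4) by simp
      qed
    qed
    then have "l \<ge> 2*n" using len jk l kN by simp
    with up show "l \<in> {2*n..2*m}" by simp
  qed
  show "2*m \<in> mlengths Pfin sumset {0} {2*n-2..2*m}"
    unfolding mlengths_eq T
  proof (intro CollectI exI conjI)
    let ?xs = "replicate k {1} @ replicate N {0,1::nat}"
    show "set ?xs \<subseteq> {x. atom x}" using a1 a01 by auto
    show "{k..k+N} = mp ?xs" by (simp only: mp_append mp_rep1 mp_rep01 shift_int)
    show "2*m = length ?xs" using kN by simp
  qed
  show "2*n \<in> mlengths Pfin sumset {0} {2*n-2..2*m}"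
    unfolding mlengths_eq T
  proof (intro CollectI exI conjI)
    let ?xs = "replicate k {1} @ [{0,1::nat}, Odd (N-1)]"
    show "set ?xs \<subseteq> {x. atom x}" using a1 a01 atom_Odd[OF kN(3)] by auto
    have "mp [{0,1::nat}, Odd (N-1)] = {0..N}"
      using sumset01_Odd[OF kN(3)] kN(4) by simp
    then show "{k..k+N} = mp ?xs" by (simp only: mp_append mp_rep1 shift_int)
    show "2*n = length ?xs" using kN by simp
  qed
qed



lemma setpow1: "setpow k {1} = {k}"
  unfolding setpow_def by (induction k) (simp_all add: sumset_single)

lemma setpow1': "setpow k {Suc 0} = {k}" using setpow1 by simp

lemma Fgen_eq: "Fgen = {{k} | k. True}"
  by (simp add: Fgen_def setpow1')

lemma shift_decomp: assumes "\<forall>x\<in>A. k \<le> x" shows "A = sumset {k} ((\<lambda>x. x - k) ` A)"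
proof -
  have "(\<lambda>x. k + (x - k)) ` A = (\<lambda>x. x) ` A" using assms by (intro image_cong) auto
  then show ?thesis unfolding sumset_single image_image by simp
qed

lemma mdvd1: assumes A: "A \<in> Pfin" shows "mdvd Pfin sumset {1} A \<longleftrightarrow> 0 \<notin> A"
proof
  assume "mdvd Pfin sumset {1} A"
  then obtain c where "A = sumset {1} c" by (auto simp: mdvd_def)
  then show "0 \<notin> A" by (auto simp: sumset_single)
next
  assume z: "0 \<notin> A"
  have "\<forall>x\<in>A. 1 \<le> x" using z by (metis less_one not_le)
  then have "A = sumset {1} ((\<lambda>x. x - 1) ` A)" by (rule shift_decomp)
  moreover have "(\<lambda>x. x - 1) ` A \<in> Pfin" using A by (auto simp: Pfin_def)
  ultimately show "mdvd Pfin sumset {1} A" unfolding mdvd_def by blast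
qed

lemma part_prime: "mprime Pfin sumset {0} {1}"
  unfolding mprime_def munit_iff
proof (intro conjI ballI impI)
  show "{1} \<in> Pfin" by simp
  show "{1} \<noteq> ({0}::nat set)" by simp
  fix a b assume a: "a \<in> Pfin" and b: "b \<in> Pfin" and d: "mdvd Pfin sumset {1} (sumset a b)"
  have "0 \<notin> sumset a b" using d mdvd1 sumset_Pfin[OF a b] by blast
  then have "0 \<notin> a \<or> 0 \<notin> b" using zero_sumset by blast
  then show "mdvd Pfin sumset {1} a \<or> mdvd Pfin sumset {1} b" using mdvd1 a b by blast
qed

lemma part_canc: "mcancellative Pfin sumset {1}"
  unfolding mcancellative_def
proof (intro conjI ballI impI)
  show "{1} \<in> Pfin" by simp
  fix b c :: "nat set" assume "sumset {1} b = sumset {1} c"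
  then have "(+) 1 ` b = (+) 1 ` c" by (simp add: sumset_single)
  moreover have "inj ((+) (1::nat))" by (simp add: inj_def)
  ultimately show "b = c" by (simp add: inj_image_eq_iff)
qed

lemma part_Fgen: "\<forall>x\<in>Fgen. \<exists>!k. x = setpow k {1}"
  by (auto simp: Fgen_eq setpow1')

lemma part_Pfin0: "Pfin0 \<subseteq> Pfin \<and> {0} \<in> Pfin0 \<and> (\<forall>A\<in>Pfin0. \<forall>B\<in>Pfin0. sumset A B \<in> Pfin0)"
proof -
  have e: "Pfin0 = {A. A \<in> Pfin \<and> 0 \<in> A}" by (auto simp: Pfin0_def Pfin_def)
  show ?thesis unfolding e using sumset_Pfin zero_sumset by auto
qed

lemma part_bij: "bij_betw (\<lambda>(x, B). sumset x B) (Fgen \<times> Pfin0) Pfin"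
  unfolding bij_betw_def
proof
  show "inj_on (\<lambda>(x, B). sumset x B) (Fgen \<times> Pfin0)"
  proof (rule inj_onI, clarify)
    fix x B x' B' assume x: "x \<in> Fgen" and B: "B \<in> Pfin0" and x': "x' \<in> Fgen" and B': "B' \<in> Pfin0"
      and e: "sumset x B = sumset x' B'"
    obtain k where k: "x = {k}" using x by (auto simp: Fgen_eq)
    obtain k' where k': "x' = {k'}" using x' by (auto simp: Fgen_eq)
    have e2: "(+) k ` B = (+) k' ` B'" using e k k' by (simp add: sumset_single)
    have "k \<in> (+) k' ` B'" unfolding e2[symmetric] using B by (auto simp: Pfin0_def)
    then have "k' \<le> k" by auto
    moreover have "k' \<in> (+) k ` B" unfolding e2 using B' by (auto simp: Pfin0_def)
    then have "k \<le> k'" by auto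
    ultimately have kk: "k = k'" by simp
    moreover have "inj ((+) k)" by (simp add: inj_def)
    ultimately have "B = B'" using e2 by (simp add: inj_image_eq_iff)
    then show "x = x' \<and> B = B'" using k k' kk by simp
  qed
  show "(\<lambda>(x, B). sumset x B) ` (Fgen \<times> Pfin0) = Pfin"
  proof
    show "(\<lambda>(x, B). sumset x B) ` (Fgen \<times> Pfin0) \<subseteq> Pfin"
      using sumset_Pfin part_Pfin0 by (auto simp: Fgen_eq)
    show "Pfin \<subseteq> (\<lambda>(x, B). sumset x B) ` (Fgen \<times> Pfin0)"
    proof
      fix A assume A: "A \<in> Pfin"
      define k where "k = Min A"
      have f: "finite A" "A \<noteq> {}" using A by (auto simp: Pfin_def)
      have "\<forall>x\<in>A. k \<le> x" using f by (simp add: k_def)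
      then have eA: "A = sumset {k} ((\<lambda>x. x - k) ` A)" by (rule shift_decomp)
      have "k \<in> A" using f by (simp add: k_def)
      then have "(\<lambda>x. x - k) ` A \<in> Pfin0" using f by (force simp: Pfin0_def)
      moreover have "{k} \<in> Fgen" by (auto simp: Fgen_eq)
      ultimately show "A \<in> (\<lambda>(x, B). sumset x B) ` (Fgen \<times> Pfin0)"
        using eA by (auto intro!: image_eqI[of _ _ "({k}, (\<lambda>x. x - k) ` A)"])
    qed
  qed
qed

lemma part_elastic: "fully_elastic Pfin sumset {0}"
  unfolding fully_elastic_def
proof (intro allI impI)
  fix q :: rat assume "1 < q \<and> ereal (real_of_rat q) < rho_monoid Pfin sumset {0}"
  then have q1: "1 < q" by simp
  obtain a b where qa: "quotient_of q = (a, b)" by (cases "quotient_of q")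
  have bpos: "b > 0" using qa quotient_of_denom_pos by blast
  have qd: "q = of_int a / of_int b" using qa quotient_of_div by blast
  have "of_int b < (of_int a :: rat)" using q1 bpos unfolding qd by (simp add: less_divide_eq)
  then have ab: "b < a" by simp
  define m where "m = nat a"
  define n where "n = nat b"
  have n1: "1 \<le> n" and nm: "n < m" using ab bpos by (auto simp: m_def n_def)
  define L where "L = mlengths Pfin sumset {0} {2*n-2..2*m}"
  note E = elastic_elem[OF n1 nm, folded L_def]
  have fL: "finite L" using E(1) finite_subset by blast
  have MaxL: "Max L = 2*m" using E fL by (intro Max_eqI) auto
  have MinL: "Min L = 2*n" using E fL by (intro Min_eqI) auto
  have L0: "L \<noteq> {0}" using E(3) nm by auto
  have "rho_len L = ereal (real (2*m) / real (2*n))" unfolding rho_len_def using L0 MaxL MinL by simp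
  also have "real (2*m) / real (2*n) = real m / real n" by simp
  also have "real m / real n = real_of_rat q"
    using ab bpos unfolding qd m_def n_def by (simp add: of_rat_divide)
  finally have "rho_len L = ereal (real_of_rat q)" .
  moreover have "{2*n-2..2*m} \<in> Pfin" using nm by (auto simp: Pfin_def)
  ultimately show "\<exists>a\<in>Pfin. rho_len (mlengths Pfin sumset {0} a) = ereal (real_of_rat q)"
    unfolding L_def by blast
qed



definition mle :: "('v \<Rightarrow>\<^sub>0 nat) \<Rightarrow> ('v \<Rightarrow>\<^sub>0 nat) \<Rightarrow> bool" where
  "mle g m \<longleftrightarrow> (\<forall>v. Poly_Mapping.lookup g v \<le> Poly_Mapping.lookup m v)"

definition monideal :: "('v \<Rightarrow>\<^sub>0 nat) set \<Rightarrow> (('v \<Rightarrow>\<^sub>0 nat) \<Rightarrow>\<^sub>0 'a::comm_ring_1) set" where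
  "monideal G = {p. \<forall>m\<in>Poly_Mapping.keys p. \<exists>g\<in>G. mle g m}"

lemma mle_add: "mle g m \<Longrightarrow> mle g (x + m)"
  by (auto simp: mle_def lookup_add intro: trans_le_add2)

lemma mle_add2: "mle g m \<Longrightarrow> mle h n \<Longrightarrow> mle (g + h) (m + n)"
  by (auto simp: mle_def lookup_add intro: add_mono)

lemma is_ideal_monideal: "is_ideal (monideal G :: (('v \<Rightarrow>\<^sub>0 nat) \<Rightarrow>\<^sub>0 'a::comm_ring_1) set)"
  unfolding is_ideal_def
proof (intro conjI ballI allI)
  show "0 \<in> monideal G" by (simp add: monideal_def)
  fix a b :: "(('v \<Rightarrow>\<^sub>0 nat) \<Rightarrow>\<^sub>0 'a::comm_ring_1)" assume a: "a \<in> monideal G" and b: "b \<in> monideal G"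
  show "a + b \<in> monideal G" unfolding monideal_def
  proof (intro CollectI ballI)
    fix m assume "m \<in> Poly_Mapping.keys (a + b)"
    then have "m \<in> Poly_Mapping.keys a \<or> m \<in> Poly_Mapping.keys b" using keys_add[of a b] by auto
    moreover have "\<forall>m\<in>Poly_Mapping.keys a. \<exists>g\<in>G. mle g m" using a by (simp add: monideal_def)
    moreover have "\<forall>m\<in>Poly_Mapping.keys b. \<exists>g\<in>G. mle g m" using b by (simp add: monideal_def)
    ultimately show "\<exists>g\<in>G. mle g m" by blast
  qed
next
  fix a r :: "(('v \<Rightarrow>\<^sub>0 nat) \<Rightarrow>\<^sub>0 'a::comm_ring_1)" assume a: "a \<in> monideal G"
  show "r * a \<in> monideal G" unfolding monideal_def
  proof (intro CollectI ballI)
    fix m assume "m \<in> Poly_Mapping.keys (r * a)"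
    then have "m \<in> {x + y | x y. x \<in> Poly_Mapping.keys r \<and> y \<in> Poly_Mapping.keys a}"
      using keys_mult[of r a] by auto
    then obtain s t where st: "m = s + t" "t \<in> Poly_Mapping.keys a" by blast
    have "\<forall>m\<in>Poly_Mapping.keys a. \<exists>g\<in>G. mle g m" using a by (simp add: monideal_def)
    then obtain g where "g \<in> G" "mle g t" using st by blast
    then show "\<exists>g\<in>G. mle g m" using st mle_add by blast
  qed
qed

lemma single_in: "g \<in> G \<Longrightarrow> Poly_Mapping.single g 1 \<in> monideal G"
  by (auto simp: monideal_def mle_def)

lemma monideal_nz: "g \<in> G \<Longrightarrow> monideal G \<noteq> ({0} :: (('v \<Rightarrow>\<^sub>0 nat) \<Rightarrow>\<^sub>0 'a::comm_ring_1) set)"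
proof
  assume g: "g \<in> G" and e: "monideal G = ({0} :: (('v \<Rightarrow>\<^sub>0 nat) \<Rightarrow>\<^sub>0 'a) set)"
  have "(Poly_Mapping.single g 1 :: ('v \<Rightarrow>\<^sub>0 nat) \<Rightarrow>\<^sub>0 'a) \<in> monideal G" using g by (rule single_in)
  then have "(Poly_Mapping.single g 1 :: ('v \<Rightarrow>\<^sub>0 nat) \<Rightarrow>\<^sub>0 'a) = 0" using e by simp
  then have "Poly_Mapping.lookup (Poly_Mapping.single g 1 :: ('v \<Rightarrow>\<^sub>0 nat) \<Rightarrow>\<^sub>0 'a) g = 0" by simp
  then show False by simp
qed

lemma monideal_0: "monideal {0} = UNIV"
  by (auto simp: monideal_def mle_def)

lemma monideal_memD: "p \<in> monideal S \<Longrightarrow> m \<in> Poly_Mapping.keys p \<Longrightarrow> \<exists>s\<in>S. mle s m"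
  unfolding monideal_def by blast

lemma monideal_subkeys: "p \<in> monideal S \<Longrightarrow> Poly_Mapping.keys q \<subseteq> Poly_Mapping.keys p \<Longrightarrow> q \<in> monideal S"
  unfolding monideal_def by blast

lemma monideal_memI: "(\<And>m. m \<in> Poly_Mapping.keys p \<Longrightarrow> \<exists>s\<in>S. mle s m) \<Longrightarrow> p \<in> monideal S"
  unfolding monideal_def by blast

lemma prodsetI: "a \<in> A \<Longrightarrow> b \<in> B \<Longrightarrow> a * b \<in> {x * y | x y. x \<in> A \<and> y \<in> B}"
  by blast

lemma sumsetI: "a \<in> A \<Longrightarrow> b \<in> B \<Longrightarrow> a + b \<in> {x + y | x y. x \<in> A \<and> y \<in> B}"
  by blast

lemma monomial_in:
  fixes K :: "(('v \<Rightarrow>\<^sub>0 nat) \<Rightarrow>\<^sub>0 'a::comm_ring_1) set"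
  assumes K: "is_ideal K"
    and P: "{a * b | a b. a \<in> monideal G \<and> b \<in> monideal H} \<subseteq> K"
    and g: "g \<in> G" and h: "h \<in> H" and le: "mle (g + h) m"
  shows "Poly_Mapping.single m c \<in> K"
proof -
  define d where "d = m - (g + h)"
  have md: "m = (d + g) + h"
  proof (intro poly_mapping_eqI)
    fix k have "Poly_Mapping.lookup (g + h) k \<le> Poly_Mapping.lookup m k" using le by (simp add: mle_def)
    then show "Poly_Mapping.lookup m k = Poly_Mapping.lookup (d + g + h) k"
      by (simp add: d_def lookup_add lookup_minus)
  qed
  have eq: "Poly_Mapping.single m c = Poly_Mapping.single (d + g) c * (Poly_Mapping.single h 1 :: ('v \<Rightarrow>\<^sub>0 nat) \<Rightarrow>\<^sub>0 'a)"
    by (simp add: mult_single md)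
  have x: "(Poly_Mapping.single (d + g) c :: ('v \<Rightarrow>\<^sub>0 nat) \<Rightarrow>\<^sub>0 'a) \<in> monideal G"
  proof (rule monideal_memI)
    fix m' assume "m' \<in> Poly_Mapping.keys (Poly_Mapping.single (d + g) c :: ('v \<Rightarrow>\<^sub>0 nat) \<Rightarrow>\<^sub>0 'a)"
    then have "m' = d + g" by (simp split: if_splits)
    moreover have "mle g (d + g)" by (simp add: mle_def lookup_add)
    ultimately show "\<exists>s\<in>G. mle s m'" using g by blast
  qed
  have y: "(Poly_Mapping.single h 1 :: ('v \<Rightarrow>\<^sub>0 nat) \<Rightarrow>\<^sub>0 'a) \<in> monideal H"
    using h by (rule single_in)
  have "Poly_Mapping.single (d + g) c * (Poly_Mapping.single h 1 :: ('v \<Rightarrow>\<^sub>0 nat) \<Rightarrow>\<^sub>0 'a)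
      \<in> {a * b | a b. a \<in> monideal G \<and> b \<in> monideal H}"
    using x y by (rule prodsetI)
  then show ?thesis unfolding eq by (rule subsetD[OF P])
qed

lemma monideal_in_K:
  fixes K :: "(('v \<Rightarrow>\<^sub>0 nat) \<Rightarrow>\<^sub>0 'a::comm_ring_1) set"
  assumes K: "is_ideal K"
    and P: "{a * b | a b. a \<in> monideal G \<and> b \<in> monideal H} \<subseteq> K"
  shows "\<forall>p. card (Poly_Mapping.keys p) = N \<longrightarrow> p \<in> monideal {g + h | g h. g \<in> G \<and> h \<in> H} \<longrightarrow> p \<in> K"
proof (induction N)
  case 0
  show ?case
  proof (intro allI impI)
    fix p :: "('v \<Rightarrow>\<^sub>0 nat) \<Rightarrow>\<^sub>0 'a" assume "card (Poly_Mapping.keys p) = 0"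
    then have "p = 0" by simp
    moreover have "0 \<in> K" using K by (simp add: is_ideal_def)
    ultimately show "p \<in> K" by simp
  qed
next
  case (Suc N)
  show ?case
  proof (intro allI impI)
    fix p :: "('v \<Rightarrow>\<^sub>0 nat) \<Rightarrow>\<^sub>0 'a" assume c: "card (Poly_Mapping.keys p) = Suc N"
      and p: "p \<in> monideal {g + h | g h. g \<in> G \<and> h \<in> H}"
    have "Poly_Mapping.keys p \<noteq> {}" using c by auto
    then obtain m where m: "m \<in> Poly_Mapping.keys p" by blast
    define s where "s = Poly_Mapping.single m (Poly_Mapping.lookup p m)"
    define p' where "p' = p - s"
    have kp': "Poly_Mapping.keys p' = Poly_Mapping.keys p - {m}"
    proof (intro set_eqI)
      fix k show "k \<in> Poly_Mapping.keys p' \<longleftrightarrow> k \<in> Poly_Mapping.keys p - {m}"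
        by (cases "k = m") (simp_all add: p'_def s_def in_keys_iff lookup_minus lookup_single)
    qed
    have cN: "card (Poly_Mapping.keys p') = N" using c m kp' by simp
    have "Poly_Mapping.keys p' \<subseteq> Poly_Mapping.keys p" using kp' by blast
    with p have p'M: "p' \<in> monideal {g + h | g h. g \<in> G \<and> h \<in> H}" by (rule monideal_subkeys)
    have p'K: "p' \<in> K" using Suc.IH cN p'M by blast
    obtain gh where gh: "gh \<in> {g + h | g h. g \<in> G \<and> h \<in> H}" "mle gh m"
      using monideal_memD[OF p m] by blast
    then obtain g h where g: "g \<in> G" and h: "h \<in> H" and ghe: "gh = g + h" by blast
    have "mle (g + h) m" using gh(2) ghe by simp
    then have sK: "s \<in> K" unfolding s_def by (rule monomial_in[OF K P g h])
    have add: "\<forall>a\<in>K. \<forall>b\<in>K. a + b \<in> K" using K unfolding is_ideal_def by blast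
    have "p' + s \<in> K" using add p'K sK by blast
    then show "p \<in> K" by (simp add: p'_def)
  qed
qed

lemma ideal_prod_monideal:
  "ideal_prod (monideal G :: (('v \<Rightarrow>\<^sub>0 nat) \<Rightarrow>\<^sub>0 'a::comm_ring_1) set) (monideal H) =
     monideal {g + h | g h. g \<in> G \<and> h \<in> H}"
proof (rule equalityI)
  let ?M = "monideal {g + h | g h. g \<in> G \<and> h \<in> H} :: (('v \<Rightarrow>\<^sub>0 nat) \<Rightarrow>\<^sub>0 'a) set"
  have "{a * b | a b. a \<in> monideal G \<and> b \<in> monideal H} \<subseteq> ?M"
  proof
    fix z assume "z \<in> {a * b | a b. a \<in> (monideal G :: (('v \<Rightarrow>\<^sub>0 nat) \<Rightarrow>\<^sub>0 'a) set) \<and> b \<in> monideal H}"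
    then obtain a b :: "('v \<Rightarrow>\<^sub>0 nat) \<Rightarrow>\<^sub>0 'a" where a: "a \<in> monideal G" and b: "b \<in> monideal H" and z: "z = a * b"
      by blast
    show "z \<in> ?M" unfolding z
    proof (rule monideal_memI)
      fix m assume "m \<in> Poly_Mapping.keys (a * b)"
      then obtain s t where st: "m = s + t" "s \<in> Poly_Mapping.keys a" "t \<in> Poly_Mapping.keys b"
        using keys_mult[of a b] by auto
      obtain g where g: "g \<in> G" "mle g s" using monideal_memD[OF a st(2)] by blast
      obtain h where h: "h \<in> H" "mle h t" using monideal_memD[OF b st(3)] by blast
      have "g + h \<in> {g + h | g h. g \<in> G \<and> h \<in> H}" using g(1) h(1) by (rule sumsetI)
      moreover have "mle (g + h) m" unfolding st(1) using g(2) h(2) by (rule mle_add2)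
      ultimately show "\<exists>gh\<in>{g + h | g h. g \<in> G \<and> h \<in> H}. mle gh m" by (rule bexI[rotated])
    qed
  qed
  then have "?M \<in> {K. is_ideal K \<and> {a * b | a b. a \<in> monideal G \<and> b \<in> monideal H} \<subseteq> K}"
    using is_ideal_monideal by simp
  then show "ideal_prod (monideal G) (monideal H) \<subseteq> ?M"
    unfolding ideal_prod_def by (rule Inter_lower)
  show "?M \<subseteq> ideal_prod (monideal G) (monideal H)"
    unfolding ideal_prod_def
  proof (intro subsetI InterI)
    fix p :: "('v \<Rightarrow>\<^sub>0 nat) \<Rightarrow>\<^sub>0 'a" and K :: "(('v \<Rightarrow>\<^sub>0 nat) \<Rightarrow>\<^sub>0 'a) set" assume p: "p \<in> ?M" and Kin: "K \<in> {K. is_ideal K \<and> {a * b | a b. a \<in> monideal G \<and> b \<in> monideal H} \<subseteq> K}"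
    from Kin have K: "is_ideal K" and P: "{a * b | a b. a \<in> monideal G \<and> b \<in> monideal H} \<subseteq> K" by auto
    show "p \<in> K" using monideal_in_K[OF K P] p by blast
  qed
qed



definition ex :: "'v \<Rightarrow> 'v \<Rightarrow> nat set \<Rightarrow> nat \<Rightarrow> ('v \<Rightarrow>\<^sub>0 nat)" where
  "ex x y A a = Poly_Mapping.single x a + Poly_Mapping.single y (Max A - a)"

lemma lookup_ex: "x \<noteq> y \<Longrightarrow> Poly_Mapping.lookup (ex x y A a) v =
    (if v = x then a else if v = y then Max A - a else 0)"
  by (auto simp: ex_def lookup_add lookup_single)

lemma ex_sum: assumes xy: "x \<noteq> y" and A: "A \<in> Pfin" and B: "B \<in> Pfin" and a: "a \<in> A" and b: "b \<in> B"
  shows "ex x y A a + ex x y B b = ex x y (sumset A B) (a + b)"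
proof -
  have "a \<le> Max A" "b \<le> Max B" using A B a b by (auto simp: Pfin_def)
  then show ?thesis
    using xy by (intro poly_mapping_eqI) (simp add: lookup_add lookup_ex Max_sumset[OF A B])
qed

lemma ex_set: assumes xy: "x \<noteq> y" and A: "A \<in> Pfin" and B: "B \<in> Pfin"
  shows "{g + h | g h. g \<in> ex x y A ` A \<and> h \<in> ex x y B ` B} = ex x y (sumset A B) ` sumset A B"
proof (rule equalityI)
  show "{g + h | g h. g \<in> ex x y A ` A \<and> h \<in> ex x y B ` B} \<subseteq> ex x y (sumset A B) ` sumset A B"
  proof
    fix z assume "z \<in> {g + h | g h. g \<in> ex x y A ` A \<and> h \<in> ex x y B ` B}"
    then obtain a b where a: "a \<in> A" and b: "b \<in> B" and z: "z = ex x y A a + ex x y B b" by blast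
    have "a + b \<in> sumset A B" using a b by (auto simp: sumset_iff)
    then show "z \<in> ex x y (sumset A B) ` sumset A B"
      using ex_sum[OF xy A B a b] z by simp
  qed
  show "ex x y (sumset A B) ` sumset A B \<subseteq> {g + h | g h. g \<in> ex x y A ` A \<and> h \<in> ex x y B ` B}"
  proof
    fix z assume "z \<in> ex x y (sumset A B) ` sumset A B"
    then obtain c where c: "c \<in> sumset A B" "z = ex x y (sumset A B) c" by blast
    then obtain a b where ab: "a \<in> A" "b \<in> B" "c = a + b" by (auto simp: sumset_iff)
    have "z = ex x y A a + ex x y B b" using ex_sum[OF xy A B ab(1,2)] ab(3) c(2) by simp
    moreover have "ex x y A a \<in> ex x y A ` A" "ex x y B b \<in> ex x y B ` B" using ab by auto
    ultimately show "z \<in> {g + h | g h. g \<in> ex x y A ` A \<and> h \<in> ex x y B ` B}"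
      by blast
  qed
qed

lemma comb: assumes A: "A \<in> Pfin" and B: "B \<in> Pfin"
  and AB: "\<forall>a\<in>A. \<exists>b\<in>B. b \<le> a \<and> Max B - b \<le> Max A - a"
  and BA: "\<forall>b\<in>B. \<exists>a\<in>A. a \<le> b \<and> Max A - a \<le> Max B - b"
  shows "A = B"
proof -
  have fA: "finite A" "A \<noteq> {}" and fB: "finite B" "B \<noteq> {}" using A B by (auto simp: Pfin_def)
  obtain b where b: "b \<in> B" "b \<le> Max A" "Max B - b \<le> 0" using AB Max_in[OF fA] by fastforce
  have "b \<le> Max B" using b fB by simp
  then have "Max B \<le> Max A" using b by simp
  moreover obtain a where a: "a \<in> A" "a \<le> Max B" "Max A - a \<le> 0" using BA Max_in[OF fB] by fastforce
  have "a \<le> Max A" using a fA by simp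
  then have "Max A \<le> Max B" using a by simp
  ultimately have M: "Max A = Max B" by simp
  show ?thesis
  proof (intro equalityI subsetI)
    fix a assume a: "a \<in> A"
    then obtain b where b: "b \<in> B" "b \<le> a" "Max B - b \<le> Max A - a" using AB by blast
    have "a \<le> Max A" "b \<le> Max B" using a b fA fB by auto
    then have "a = b" using b M by linarith
    then show "a \<in> B" using b by simp
  next
    fix b assume b: "b \<in> B"
    then obtain a where a: "a \<in> A" "a \<le> b" "Max A - a \<le> Max B - b" using BA by blast
    have "a \<le> Max A" "b \<le> Max B" using a b fA fB by auto
    then have "a = b" using a M by linarith
    then show "b \<in> A" using a by simp
  qed
qed

lemma part2:
  assumes card: "card (UNIV :: 'v::finite set) \<ge> 2"
  shows "\<exists>\<phi> :: nat set \<Rightarrow> ('v, 'a::comm_ring_1) mpoly_ring set.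
           inj_on \<phi> Pfin \<and> \<phi> ` Pfin \<subseteq> nonzero_ideals \<and> \<phi> {0} = UNIV \<and>
           (\<forall>A\<in>Pfin. \<forall>B\<in>Pfin. \<phi> (sumset A B) = ideal_prod (\<phi> A) (\<phi> B))"
proof -
  have "\<exists>x y :: 'v. x \<noteq> y"
  proof (rule ccontr)
    assume "\<not> (\<exists>x y :: 'v. x \<noteq> y)"
    then have "\<forall>x y :: 'v. x = y" by blast
    then have "(UNIV :: 'v set) \<subseteq> {undefined}" by auto
    then have "card (UNIV :: 'v set) \<le> card {undefined :: 'v}" by (intro card_mono) auto
    then show False using card by simp
  qed
  then obtain x y :: 'v where xy: "x \<noteq> y" by blast
  define \<phi> :: "nat set \<Rightarrow> ('v, 'a) mpoly_ring set" where "\<phi> A = monideal (ex x y A ` A)" for A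
  have inj: "inj_on \<phi> Pfin"
  proof (rule inj_onI)
    fix A B assume A: "A \<in> Pfin" and B: "B \<in> Pfin" and e: "\<phi> A = \<phi> B"
    have half: "\<forall>a\<in>A. \<exists>b\<in>B. b \<le> a \<and> Max B - b \<le> Max A - a"
      if e: "\<phi> A = \<phi> B" for A B
    proof
      fix a assume a: "a \<in> A"
      have "(Poly_Mapping.single (ex x y A a) 1 :: ('v, 'a) mpoly_ring) \<in> \<phi> A"
        unfolding \<phi>_def using a by (intro single_in) auto
      then have "(Poly_Mapping.single (ex x y A a) 1 :: ('v, 'a) mpoly_ring) \<in> \<phi> B" using e by (metis)
      then have "\<exists>g\<in>ex x y B ` B. mle g (ex x y A a)" by (simp add: \<phi>_def monideal_def)
      then obtain b where b: "b \<in> B" "mle (ex x y B b) (ex x y A a)" by blast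
      have "Poly_Mapping.lookup (ex x y B b) x \<le> Poly_Mapping.lookup (ex x y A a) x"
           "Poly_Mapping.lookup (ex x y B b) y \<le> Poly_Mapping.lookup (ex x y A a) y"
        using b(2) by (auto simp: mle_def)
      then show "\<exists>b\<in>B. b \<le> a \<and> Max B - b \<le> Max A - a" using b(1) xy by (auto simp: lookup_ex)
    qed
    show "A = B" using comb[OF A B half[OF e] half[OF e[symmetric]]] .
  qed
  have nz: "\<phi> ` Pfin \<subseteq> nonzero_ideals"
  proof clarify
    fix A assume A: "A \<in> Pfin"
    then obtain a where "a \<in> A" by (auto simp: Pfin_def)
    then have "ex x y A a \<in> ex x y A ` A" by simp
    then have "monideal (ex x y A ` A) \<noteq> ({0} :: ('v, 'a) mpoly_ring set)" by (rule monideal_nz)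
    moreover have "is_ideal (monideal (ex x y A ` A) :: ('v, 'a) mpoly_ring set)" by (rule is_ideal_monideal)
    ultimately show "\<phi> A \<in> nonzero_ideals" unfolding nonzero_ideals_def \<phi>_def by simp
  qed
  have z: "\<phi> {0} = UNIV"
  proof -
    have "ex x y {0} 0 = 0" by (simp add: ex_def)
    then show ?thesis unfolding \<phi>_def using monideal_0 by simp
  qed
  have m: "\<forall>A\<in>Pfin. \<forall>B\<in>Pfin. \<phi> (sumset A B) = ideal_prod (\<phi> A) (\<phi> B)"
  proof (intro ballI)
    fix A B assume A: "A \<in> Pfin" and B: "B \<in> Pfin"
    show "\<phi> (sumset A B) = ideal_prod (\<phi> A) (\<phi> B)"
      unfolding \<phi>_def ideal_prod_monideal ex_set[OF xy A B] ..
  qed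
  show ?thesis using inj nz z m by (intro exI[of _ \<phi>] conjI)
qed


theorem proposition5p13:
  shows
    "(mprime Pfin sumset {0} {1} \<and> mcancellative Pfin sumset {1}
      \<and> (\<forall>x\<in>Fgen. \<exists>!k. x = setpow k {1})
      \<and> Pfin0 \<subseteq> Pfin \<and> {0} \<in> Pfin0 \<and> (\<forall>A\<in>Pfin0. \<forall>B\<in>Pfin0. sumset A B \<in> Pfin0)
      \<and> bij_betw (\<lambda>(x, B). sumset x B) (Fgen \<times> Pfin0) Pfin
      \<and> fully_elastic Pfin sumset {0})
   \<and> (card (UNIV :: 'v::finite set) \<ge> 2 \<longrightarrow>
        BF_monoid (nonzero_ideals :: ('v, 'a::idom) mpoly_ring set set) ideal_prod UNIV \<longrightarrow>
        (\<exists>\<phi> :: nat set \<Rightarrow> ('v, 'a) mpoly_ring set.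
           inj_on \<phi> Pfin \<and> \<phi> ` Pfin \<subseteq> nonzero_ideals \<and> \<phi> {0} = UNIV \<and>
           (\<forall>A\<in>Pfin. \<forall>B\<in>Pfin. \<phi> (sumset A B) = ideal_prod (\<phi> A) (\<phi> B))))"
proof (intro conjI impI)
  show "mprime Pfin sumset {0} {1}" by (rule part_prime)
  show "mcancellative Pfin sumset {1}" by (rule part_canc)
  show "\<forall>x\<in>Fgen. \<exists>!k. x = setpow k {1}" by (rule part_Fgen)
  show "Pfin0 \<subseteq> Pfin" using part_Pfin0 by blast
  show "{0} \<in> Pfin0" using part_Pfin0 by blast
  show "\<forall>A\<in>Pfin0. \<forall>B\<in>Pfin0. sumset A B \<in> Pfin0" using part_Pfin0 by blast
  show "bij_betw (\<lambda>(x, B). sumset x B) (Fgen \<times> Pfin0) Pfin" by (rule part_bij)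
  show "fully_elastic Pfin sumset {0}" by (rule part_elastic)
  assume "card (UNIV :: 'v::finite set) \<ge> 2"
  then show "\<exists>\<phi> :: nat set \<Rightarrow> ('v, 'a) mpoly_ring set.
           inj_on \<phi> Pfin \<and> \<phi> ` Pfin \<subseteq> nonzero_ideals \<and> \<phi> {0} = UNIV \<and>
           (\<forall>A\<in>Pfin. \<forall>B\<in>Pfin. \<phi> (sumset A B) = ideal_prod (\<phi> A) (\<phi> B))"
    by (rule part2)
qed

end
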